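(* Let $\alpha_0>0$, $\omega_0\neq 0$, and $$\alpha^*_{pl}(\omega)=\alpha_0|\omega|+i\frac{2}{\pi}\alpha_0\,\omega\log\left|\frac{\omega}{\omega_0}\right|,\qquad\omega\in\mathbb{R}.$$ Then the function $K(\vec x,t)=\frac{1}{\sqrt{2\pi}}\mathcal{F}^{-1}\{e^{-\alpha^*_{pl}(\cdot)|\vec x|}\}(t)$ is not causal.
   Context: Fourier convention: $\mathcal{F}^{-1}\{\hat f\}(t)=\frac{1}{\sqrt{2\pi}}\int_{\mathbb{R}}e^{-i\omega t}\hat f(\omega)\,d\omega$ (tempered distributions). $K$ is causal if $t\mapsto K(\vec x,t)$ vanishes for $t<0$ for every $\vec x\in\mathbb{R}^3$. *)

theory Defs
  imports "HOL-Analysis.Analysis"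
begin

text \<open>The attenuation law alpha*_pl(omega) = alpha0 |omega| + i (2/pi) alpha0 omega log|omega/omega0|.
  At omega = 0 the value is the continuous extension 0 (a single point; irrelevant for integrals).\<close>
definition alpha_pl :: "real \<Rightarrow> real \<Rightarrow> real \<Rightarrow> complex" where
  "alpha_pl \<alpha>0 \<omega>0 \<omega> =
     (if \<omega> = 0 then 0
      else complex_of_real (\<alpha>0 * \<bar>\<omega>\<bar>)
           + \<i> * complex_of_real ((2 / pi) * \<alpha>0 * \<omega> * ln \<bar>\<omega> / \<omega>0\<bar>))"

definition inv_fourier :: "(real \<Rightarrow> complex) \<Rightarrow> real \<Rightarrow> complex" where
  "inv_fourier g t =
     complex_of_real (1 / sqrt (2 * pi)) *
     (\<integral>\<omega>. exp (- \<i> * complex_of_real (\<omega> * t)) * g \<omega> \<partial>lborel)"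

definition K_pl :: "real \<Rightarrow> real \<Rightarrow> real ^ 3 \<Rightarrow> real \<Rightarrow> complex" where
  "K_pl \<alpha>0 \<omega>0 x t =
     complex_of_real (1 / sqrt (2 * pi)) *
     inv_fourier (\<lambda>\<omega>. exp (- alpha_pl \<alpha>0 \<omega>0 \<omega> * complex_of_real (norm x))) t"

text \<open>Causality: for every x, t \<mapsto> K(x,t) vanishes for t < 0 (almost everywhere,
  i.e. as a locally integrable function / distribution).\<close>
definition causal :: "(real ^ 3 \<Rightarrow> real \<Rightarrow> complex) \<Rightarrow> bool" where
  "causal K \<longleftrightarrow> (\<forall>x. AE t in lborel. t < 0 \<longrightarrow> K x t = 0)"

end

theory Submission imports Defs "HOL-Probability.Probability" "HOL-Complex_Analysis.Complex_Analysis" begin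

lemma integrable_exp_abs:
  fixes c :: real assumes c: "c > 0"
  shows "integrable lborel (\<lambda>x. exp (- c * \<bar>x\<bar>))"
proof -
  interpret prob_space "density lborel (exponential_density c)"
    using prob_space_exponential_density[OF c] .
  have "integrable (density lborel (\<lambda>x. ennreal (exponential_density c x))) (\<lambda>_. 1::real)"
    by simp
  then have i1: "integrable lborel (exponential_density c)"
    by (subst (asm) integrable_density) (auto simp: exponential_density_nonneg[OF c])
  have i2: "integrable lborel (\<lambda>x. exponential_density c (0 + (-1) * x))"
    by (rule lborel_integrable_real_affine[OF i1]) simp
  have "integrable lborel (\<lambda>x. (exponential_density c x + exponential_density c (0 + (-1) * x)) / c)"
    using i1 i2 by auto
  then show ?thesis
  proof (rule Bochner_Integration.integrable_bound)
    show "AE x in lborel. norm (exp (- c * \<bar>x\<bar>)) \<le> norm ((exponential_density c x + exponential_density c (0 + (-1) * x)) / c)"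
      using c by (auto simp: exponential_density_def)
  qed simp
qed

lemma exp_partial_le:
  fixes x :: real assumes "x \<ge> 0"
  shows "(\<Sum>n<N. x^n / fact n) \<le> exp x"
proof -
  have s: "(\<lambda>n. x^n / fact n) sums exp x"
    using exp_converges[of x] by (simp add: divide_inverse mult.commute scaleR_conv_of_real)
  show ?thesis
    using sum_le_suminf[OF sums_summable[OF s], of "{..<N}"] sums_unique[OF s] assms by auto
qed

lemma term_le_exp:
  fixes x :: real assumes "x \<ge> 0"
  shows "x^n / fact n \<le> exp x"
proof -
  have "x^n / fact n \<le> (\<Sum>k<Suc n. x^k / fact k)"
    using assms by (intro member_le_sum) auto
  also have "\<dots> \<le> exp x" by (rule exp_partial_le[OF assms])
  finally show ?thesis .
qed

lemma alpha_pl_measurable [measurable]: "alpha_pl a w \<in> borel_measurable borel"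
  unfolding alpha_pl_def[abs_def] by measurable

lemma Re_alpha_pl: "Re (alpha_pl a w x) = a * \<bar>x\<bar>"
  by (simp add: alpha_pl_def)

lemma norm_G: "norm (exp (- alpha_pl a w x)) = exp (- a * \<bar>x\<bar>)"
  by (simp add: norm_exp_eq_Re Re_alpha_pl)

lemma norm_exp_i: "norm (exp (- \<i> * complex_of_real x * z)) = exp (x * Im z)"
  by (simp add: norm_exp_eq_Re)


lemma char_zero_imp_AE_zero:
  fixes H :: "real \<Rightarrow> real"
  assumes intH: "integrable lborel H"
    and ch: "\<And>t. (\<integral>x. iexp (t * x) * complex_of_real (H x) \<partial>lborel) = 0"
  shows "AE x in lborel. H x = 0"
proof -
  define P where "P x = max (H x) 0" for x
  define N where "N x = max (- H x) 0" for x
  have Hm[measurable]: "H \<in> borel_measurable borel"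
    using intH by simp
  have [measurable]: "P \<in> borel_measurable borel" "N \<in> borel_measurable borel"
    unfolding P_def[abs_def] N_def[abs_def] by measurable
  have iP: "integrable lborel P" unfolding P_def using intH by (intro integrable_max) auto
  have iN: "integrable lborel N" unfolding N_def using intH by (intro integrable_max) auto
  have HPN: "H x = P x - N x" for x by (simp add: P_def N_def max_def)
  have Pn: "P x \<ge> 0" "N x \<ge> 0" for x by (auto simp: P_def N_def)
  have ieP: "integrable lborel (\<lambda>x. iexp (t * x) * complex_of_real (P x))" for t
    by (rule Bochner_Integration.integrable_bound[where f="\<lambda>x. complex_of_real (P x)"])
       (auto simp: norm_mult iP)
  have ieN: "integrable lborel (\<lambda>x. iexp (t * x) * complex_of_real (N x))" for t
    by (rule Bochner_Integration.integrable_bound[where f="\<lambda>x. complex_of_real (N x)"])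
       (auto simp: norm_mult iN)
  have chPN: "(\<integral>x. iexp (t * x) * complex_of_real (P x) \<partial>lborel)
      = (\<integral>x. iexp (t * x) * complex_of_real (N x) \<partial>lborel)" for t
  proof -
    have "(\<integral>x. iexp (t * x) * complex_of_real (P x) \<partial>lborel)
      - (\<integral>x. iexp (t * x) * complex_of_real (N x) \<partial>lborel)
      = (\<integral>x. iexp (t * x) * complex_of_real (P x) - iexp (t * x) * complex_of_real (N x) \<partial>lborel)"
      using ieP ieN by (rule Bochner_Integration.integral_diff[symmetric])
    also have "\<dots> = (\<integral>x. iexp (t * x) * complex_of_real (H x) \<partial>lborel)"
      by (simp add: HPN algebra_simps)
    also have "\<dots> = 0" by (rule ch)
    finally show ?thesis by simp
  qed
  have mPN: "(\<integral>x. P x \<partial>lborel) = (\<integral>x. N x \<partial>lborel)"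
  proof -
    have "complex_of_real (\<integral>x. P x \<partial>lborel) = (\<integral>x. iexp (0 * x) * complex_of_real (P x) \<partial>lborel)"
      by simp
    also have "\<dots> = (\<integral>x. iexp (0 * x) * complex_of_real (N x) \<partial>lborel)" by (rule chPN)
    also have "\<dots> = complex_of_real (\<integral>x. N x \<partial>lborel)" by simp
    finally show ?thesis by simp
  qed
  define m where "m = (\<integral>x. P x \<partial>lborel)"
  have m0: "m \<ge> 0" unfolding m_def using Pn by (simp add: integral_nonneg)
  have "AE x in lborel. P x = N x"
  proof (cases "m = 0")
    case True
    have "AE x in lborel. P x = 0"
      using True iP Pn by (subst integral_nonneg_eq_0_iff_AE[symmetric]) (auto simp: m_def)
    moreover have "AE x in lborel. N x = 0"
      using True iN Pn mPN by (subst integral_nonneg_eq_0_iff_AE[symmetric]) (auto simp: m_def)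
    ultimately show ?thesis by auto
  next
    case False
    with m0 have mpos: "m > 0" by simp
    define M1 where "M1 = density lborel (\<lambda>x. ennreal (P x / m))"
    define M2 where "M2 = density lborel (\<lambda>x. ennreal (N x / m))"
    have nnP: "(\<integral>\<^sup>+x. ennreal (P x / m) \<partial>lborel) = 1"
    proof -
      have "(\<integral>\<^sup>+x. ennreal (P x / m) \<partial>lborel) = ennreal (\<integral>x. P x / m \<partial>lborel)"
        using iP Pn mpos by (intro nn_integral_eq_integral) auto
      also have "\<dots> = 1" using mpos by (simp add: m_def)
      finally show ?thesis .
    qed
    have nnN: "(\<integral>\<^sup>+x. ennreal (N x / m) \<partial>lborel) = 1"
    proof -
      have "(\<integral>\<^sup>+x. ennreal (N x / m) \<partial>lborel) = ennreal (\<integral>x. N x / m \<partial>lborel)"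
        using iN Pn mpos by (intro nn_integral_eq_integral) auto
      also have "\<dots> = 1" using mpos mPN by (simp add: m_def)
      finally show ?thesis .
    qed
    have rd1: "real_distribution M1"
      unfolding M1_def real_distribution_def real_distribution_axioms_def
      by (auto intro!: prob_spaceI simp: emeasure_density nnP)
    have rd2: "real_distribution M2"
      unfolding M2_def real_distribution_def real_distribution_axioms_def
      by (auto intro!: prob_spaceI simp: emeasure_density nnN)
    have c1: "char M1 t = (\<integral>x. iexp (t * x) * complex_of_real (P x) \<partial>lborel) / m" for t
      unfolding char_def M1_def using Pn mpos
      by (subst integral_density) (auto simp: scaleR_conv_of_real divide_simps mult.commute)
    have c2: "char M2 t = (\<integral>x. iexp (t * x) * complex_of_real (N x) \<partial>lborel) / m" for t
      unfolding char_def M2_def using Pn mpos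
      by (subst integral_density) (auto simp: scaleR_conv_of_real divide_simps mult.commute)
    have "char M1 = char M2" using c1 c2 chPN by auto
    then have "M1 = M2" using Levy_uniqueness rd1 rd2 by blast
    then have "AE x in lborel. ennreal (P x / m) = ennreal (N x / m)"
      unfolding M1_def M2_def
      by (intro sigma_finite_measure.density_unique[OF sigma_finite_lborel]) auto
    then show ?thesis
      by eventually_elim (use Pn mpos in \<open>auto simp: divide_simps\<close>)
  qed
  then show ?thesis by eventually_elim (simp add: HPN)
qed


definition GG :: "real \<Rightarrow> real \<Rightarrow> real \<Rightarrow> complex" where
  "GG a w x = exp (- alpha_pl a w x)"

definition FF :: "real \<Rightarrow> real \<Rightarrow> complex \<Rightarrow> complex" where
  "FF a w z = (\<integral>x. exp (- \<i> * complex_of_real x * z) * GG a w x \<partial>lborel)"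

definition cc :: "real \<Rightarrow> real \<Rightarrow> complex \<Rightarrow> nat \<Rightarrow> real \<Rightarrow> complex" where
  "cc a w z0 n x = exp (- \<i> * complex_of_real x * z0) * GG a w x * (- \<i> * complex_of_real x) ^ n / fact n"

lemma GG_measurable [measurable]: "GG a w \<in> borel_measurable borel"
  unfolding GG_def[abs_def] by measurable

lemma cc_measurable [measurable]: "cc a w z0 n \<in> borel_measurable borel"
  unfolding cc_def[abs_def] by measurable

lemma norm_GG: "norm (GG a w x) = exp (- a * \<bar>x\<bar>)"
  by (simp add: GG_def norm_G Re_alpha_pl)

lemma norm_cc: "norm (cc a w z0 n x) = exp (x * Im z0) * exp (- a * \<bar>x\<bar>) * \<bar>x\<bar> ^ n / fact n"
  by (simp add: cc_def norm_mult norm_divide norm_power norm_exp_i norm_GG)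

lemma exp_Im_le: "exp (x * Im z0) \<le> exp (\<bar>x\<bar> * \<bar>Im z0\<bar>)"
  by (simp add: abs_mult[symmetric])

lemma integrable_cc:
  assumes a: "\<bar>Im z0\<bar> < a"
  shows "integrable lborel (cc a w z0 n)"
proof -
  define \<rho> where "\<rho> = (a - \<bar>Im z0\<bar>) / 2"
  have \<rho>: "\<rho> > 0" using a by (simp add: \<rho>_def)
  have "integrable lborel (\<lambda>x. exp (- \<rho> * \<bar>x\<bar>) / \<rho> ^ n)"
    using integrable_exp_abs[OF \<rho>] by simp
  then show ?thesis
  proof (rule Bochner_Integration.integrable_bound)
    show "AE x in lborel. norm (cc a w z0 n x) \<le> norm (exp (- \<rho> * \<bar>x\<bar>) / \<rho> ^ n)"
    proof (intro AE_I2)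
      fix x :: real
      have t: "(\<rho> * \<bar>x\<bar>) ^ n / fact n \<le> exp (\<rho> * \<bar>x\<bar>)"
        using \<rho> by (intro term_le_exp) simp
      have "norm (cc a w z0 n x) = exp (x * Im z0) * exp (- a * \<bar>x\<bar>) * ((\<rho> * \<bar>x\<bar>) ^ n / fact n) / \<rho> ^ n"
        using \<rho> by (simp add: norm_cc power_mult_distrib)
      also have "\<dots> \<le> exp (\<bar>x\<bar> * \<bar>Im z0\<bar>) * exp (- a * \<bar>x\<bar>) * exp (\<rho> * \<bar>x\<bar>) / \<rho> ^ n"
        using \<rho> t exp_Im_le[of x z0]
        by (intro divide_right_mono mult_mono) auto
      also have "\<dots> = exp (- \<rho> * \<bar>x\<bar>) / \<rho> ^ n"
        by (simp add: exp_add[symmetric] \<rho>_def algebra_simps)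
      finally show "norm (cc a w z0 n x) \<le> norm (exp (- \<rho> * \<bar>x\<bar>) / \<rho> ^ n)"
        using \<rho> by simp
    qed
  qed simp
qed

lemma FF_series:
  assumes a: "\<bar>Im z0\<bar> < a" and h: "norm h < (a - \<bar>Im z0\<bar>) / 2"
  shows "(\<lambda>n. (\<integral>x. cc a w z0 n x \<partial>lborel) * h ^ n) sums FF a w (z0 + h)"
proof -
  define \<rho> where "\<rho> = (a - \<bar>Im z0\<bar>) / 2"
  have \<rho>: "\<rho> > 0" using a by (simp add: \<rho>_def)
  define s where "s N x = (\<Sum>n<N. cc a w z0 n x * h ^ n)" for N x
  define f where "f x = exp (- \<i> * complex_of_real x * (z0 + h)) * GG a w x" for x
  have [measurable]: "s N \<in> borel_measurable borel" for N
    unfolding s_def[abs_def] by measurable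
  have [measurable]: "f \<in> borel_measurable borel"
    unfolding f_def[abs_def] GG_def[abs_def] by measurable
  have lim: "(\<lambda>N. s N x) \<longlonglongrightarrow> f x" for x
  proof -
    have e: "(\<lambda>n. (- \<i> * complex_of_real x * h) ^ n /\<^sub>R fact n) sums exp (- \<i> * complex_of_real x * h)"
      by (rule exp_converges)
    have "(\<lambda>n. exp (- \<i> * complex_of_real x * z0) * GG a w x * ((- \<i> * complex_of_real x * h) ^ n /\<^sub>R fact n))
       sums (exp (- \<i> * complex_of_real x * z0) * GG a w x * exp (- \<i> * complex_of_real x * h))"
      by (rule sums_mult[OF e])
    moreover have "(\<lambda>n. exp (- \<i> * complex_of_real x * z0) * GG a w x * ((- \<i> * complex_of_real x * h) ^ n /\<^sub>R fact n))
        = (\<lambda>n. cc a w z0 n x * h ^ n)"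
    proof (rule ext)
      fix n
      have pm: "(- \<i> * complex_of_real x * h) ^ n = (- \<i> * complex_of_real x) ^ n * h ^ n"
        by (rule power_mult_distrib)
      show "exp (- \<i> * complex_of_real x * z0) * GG a w x * ((- \<i> * complex_of_real x * h) ^ n /\<^sub>R fact n) = cc a w z0 n x * h ^ n"
        unfolding pm cc_def by (simp add: scaleR_conv_of_real divide_inverse mult_ac)
    qed
    moreover have "exp (- \<i> * complex_of_real x * z0) * GG a w x * exp (- \<i> * complex_of_real x * h) = f x"
    proof -
      have "exp (- \<i> * complex_of_real x * (z0 + h)) = exp (- \<i> * complex_of_real x * z0) * exp (- \<i> * complex_of_real x * h)"
        by (simp add: distrib_left exp_add[symmetric])
      then show ?thesis by (simp add: f_def mult_ac)
    qed
    ultimately have "(\<lambda>n. cc a w z0 n x * h ^ n) sums f x" by simp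
    then show ?thesis unfolding s_def sums_def .
  qed
  have bound: "norm (s N x) \<le> exp (- \<rho> * \<bar>x\<bar>)" for N x
  proof -
    have "norm (s N x) \<le> (\<Sum>n<N. norm (cc a w z0 n x * h ^ n))"
      unfolding s_def by (rule norm_sum)
    also have "\<dots> = exp (x * Im z0) * exp (- a * \<bar>x\<bar>) * (\<Sum>n<N. (\<bar>x\<bar> * norm h) ^ n / fact n)"
      by (simp add: norm_mult norm_cc norm_power sum_distrib_left power_mult_distrib mult_ac)
    also have "\<dots> \<le> exp (\<bar>x\<bar> * \<bar>Im z0\<bar>) * exp (- a * \<bar>x\<bar>) * exp (\<bar>x\<bar> * norm h)"
      using exp_Im_le[of x z0] exp_partial_le[of "\<bar>x\<bar> * norm h" N]
      by (intro mult_mono) (auto intro!: sum_nonneg)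
    also have "\<dots> = exp (\<bar>x\<bar> * (\<bar>Im z0\<bar> + norm h - a))"
      by (simp add: exp_add[symmetric] algebra_simps)
    also have "\<dots> \<le> exp (- \<rho> * \<bar>x\<bar>)"
    proof -
      have "\<bar>Im z0\<bar> + norm h - a \<le> - \<rho>" using h by (simp add: \<rho>_def field_simps)
      then have "\<bar>x\<bar> * (\<bar>Im z0\<bar> + norm h - a) \<le> \<bar>x\<bar> * (- \<rho>)"
        by (intro mult_left_mono) auto
      then show ?thesis by (simp add: mult.commute)
    qed
    finally show ?thesis .
  qed
  have conv: "(\<lambda>N. integral\<^sup>L lborel (s N)) \<longlonglongrightarrow> integral\<^sup>L lborel f"
    by (rule integral_dominated_convergence[where w="\<lambda>x. exp (- \<rho> * \<bar>x\<bar>)"])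
       (use lim bound integrable_exp_abs[OF \<rho>] in auto)
  have "integral\<^sup>L lborel (s N) = (\<Sum>n<N. (\<integral>x. cc a w z0 n x \<partial>lborel) * h ^ n)" for N
    unfolding s_def using integrable_cc[OF a]
    by (subst Bochner_Integration.integral_sum) auto
  with conv show ?thesis
    unfolding sums_def FF_def f_def by simp
qed


lemma AE_ex_Ioo:
  fixes a b :: real
  assumes "AE x in lborel. P x" and "a < b"
  shows "\<exists>x. a < x \<and> x < b \<and> P x"
proof (rule ccontr)
  assume "\<not> ?thesis"
  then have sub: "{a<..<b} \<subseteq> {x \<in> space lborel. \<not> P x}" by auto
  from assms(1) obtain N where "{x \<in> space lborel. \<not> P x} \<subseteq> N" "emeasure lborel N = 0" "N \<in> sets lborel"
    by (rule AE_E)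
  then have "emeasure lborel {a<..<b} \<le> 0"
    using sub by (metis emeasure_mono order_trans order_refl)
  then show False using assms(2) emeasure_lborel_Ioo[of a b] by simp
qed

lemma FF_holo:
  assumes a: "a > 0"
  shows "FF a w holomorphic_on {z. \<bar>Im z\<bar> < a}"
  unfolding holomorphic_on_def
proof
  fix z0 assume "z0 \<in> {z. \<bar>Im z\<bar> < a}"
  then have z0: "\<bar>Im z0\<bar> < a" by simp
  define \<rho> where "\<rho> = (a - \<bar>Im z0\<bar>) / 2"
  have \<rho>: "\<rho> > 0" using z0 by (simp add: \<rho>_def)
  have "FF a w holomorphic_on ball z0 \<rho>"
  proof (rule power_series_holomorphic[where a="\<lambda>n. (\<integral>x. cc a w z0 n x \<partial>lborel)"])
    fix u assume "u \<in> ball z0 \<rho>"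
    then have "norm (u - z0) < \<rho>" by (simp add: dist_norm norm_minus_commute)
    from FF_series[OF z0, of "u - z0" w] this
    show "(\<lambda>n. (\<integral>x. cc a w z0 n x \<partial>lborel) * (u - z0) ^ n) sums FF a w u"
      by (simp add: \<rho>_def)
  qed
  then have "FF a w field_differentiable (at z0)"
    using \<rho> by (intro holomorphic_on_imp_differentiable_at[of _ "ball z0 \<rho>"]) auto
  then show "FF a w field_differentiable (at z0 within {z. \<bar>Im z\<bar> < a})"
    by (rule field_differentiable_at_within)
qed

lemma strip_open: "open {z::complex. \<bar>Im z\<bar> < a}"
proof -
  have "{z::complex. \<bar>Im z\<bar> < a} = {z. Im z < a} \<inter> {z. Im z > - a}" by auto
  then show ?thesis by (simp add: open_Int open_halfspace_Im_lt open_halfspace_Im_gt)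
qed

lemma strip_connected: "connected {z::complex. \<bar>Im z\<bar> < a}"
proof -
  have "{z::complex. \<bar>Im z\<bar> < a} = {z. Im z < a} \<inter> {z. Im z > - a}" by auto
  then show ?thesis
    by (simp add: convex_connected convex_Int convex_halfspace_Im_lt convex_halfspace_Im_gt)
qed

lemma FF_zero_real:
  assumes a: "a > 0"
    and ae: "AE t in lborel. t < 0 \<longrightarrow> FF a w (complex_of_real t) = 0"
  shows "FF a w (complex_of_real s) = 0"
proof (rule analytic_continuation[OF FF_holo[OF a] strip_open strip_connected])
  define U where "U = complex_of_real ` {t. -1 < t \<and> t < 0 \<and> FF a w (complex_of_real t) = 0}"
  show "U \<subseteq> {z. \<bar>Im z\<bar> < a}" using a by (auto simp: U_def)
  show "- (1/2) \<in> {z. \<bar>Im z\<bar> < a}" using a by simp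
  show "complex_of_real s \<in> {z. \<bar>Im z\<bar> < a}" using a by simp
  show "\<And>z. z \<in> U \<Longrightarrow> FF a w z = 0" by (auto simp: U_def)
  show "- (1/2) islimpt U"
    unfolding islimpt_approachable
  proof (intro allI impI)
    fix e :: real assume e: "e > 0"
    define d where "d = min e (1/2)"
    have d: "d > 0" "d \<le> e" "d \<le> 1/2" using e by (auto simp: d_def)
    obtain t where t: "- (1/2) - d < t" "t < - (1/2)" "t < 0 \<longrightarrow> FF a w (complex_of_real t) = 0"
      using AE_ex_Ioo[OF ae, of "- (1/2) - d" "- (1/2)"] d by auto
    have "complex_of_real t \<in> U" using t d by (auto simp: U_def)
    moreover have "complex_of_real t \<noteq> - (1/2)"
    proof
      assume "complex_of_real t = - (1/2)"
      then have "Re (complex_of_real t) = Re (- (1/2))" by simp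
      then show False using t by simp
    qed
    moreover have "dist (complex_of_real t) (- (1/2)) < e"
    proof -
      have "complex_of_real t - (- (1/2)) = complex_of_real (t - (- (1/2)))" by simp
      then have "dist (complex_of_real t) (- (1/2)) = dist t (- (1/2))"
        by (simp only: dist_norm norm_of_real) (simp add: dist_real_def)
      also have "\<dots> < e" using t d by (simp add: dist_real_def)
      finally show ?thesis .
    qed
    ultimately show "\<exists>x'\<in>U. x' \<noteq> - (1/2) \<and> dist x' (- (1/2)) < e" by blast
  qed
qed


lemma integrable_GG_exp:
  assumes a: "a > 0" and nf: "\<And>z. norm (f z) = norm z" and [measurable]: "f \<in> borel_measurable borel"
  shows "integrable lborel (\<lambda>x. exp (\<i> * complex_of_real c * complex_of_real x) * f (GG a w x))"
  using integrable_exp_abs[OF a]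
proof (rule Bochner_Integration.integrable_bound)
  show "(\<lambda>x. exp (\<i> * complex_of_real c * complex_of_real x) * f (GG a w x)) \<in> borel_measurable lborel"
    by measurable
  show "AE x in lborel. norm (exp (\<i> * complex_of_real c * complex_of_real x) * f (GG a w x)) \<le> norm (exp (- a * \<bar>x\<bar>))"
    by (simp add: norm_mult nf norm_GG norm_exp_eq_Re)
qed

theorem theorem4:
  fixes \<alpha>0 \<omega>0 :: real
  assumes "\<alpha>0 > 0" and "\<omega>0 \<noteq> 0"
  shows "\<not> causal (K_pl \<alpha>0 \<omega>0)"
proof
  assume "causal (K_pl \<alpha>0 \<omega>0)"
  then have ae: "AE t in lborel. t < 0 \<longrightarrow> K_pl \<alpha>0 \<omega>0 (axis 1 1) t = 0"
    unfolding causal_def by blast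
  define c where "c = complex_of_real (1 / sqrt (2 * pi))"
  have c0: "c \<noteq> 0" by (simp add: c_def)
  have K: "K_pl \<alpha>0 \<omega>0 (axis 1 1) t = c * c * FF \<alpha>0 \<omega>0 (complex_of_real t)" for t
    unfolding K_pl_def inv_fourier_def FF_def GG_def c_def
    by (simp add: mult_ac)
  have "AE t in lborel. t < 0 \<longrightarrow> FF \<alpha>0 \<omega>0 (complex_of_real t) = 0"
    using ae by eventually_elim (simp add: K c0)
  then have FF0: "FF \<alpha>0 \<omega>0 (complex_of_real s) = 0" for s
    by (rule FF_zero_real[OF assms(1)])
  have I1: "(\<integral>x. exp (\<i> * complex_of_real t * complex_of_real x) * GG \<alpha>0 \<omega>0 x \<partial>lborel) = 0" for t
  proof -
    have "(\<integral>x. exp (\<i> * complex_of_real t * complex_of_real x) * GG \<alpha>0 \<omega>0 x \<partial>lborel) = FF \<alpha>0 \<omega>0 (complex_of_real (- t))"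
      unfolding FF_def by (simp add: mult_ac)
    then show ?thesis using FF0[of "- t"] by simp
  qed
  have I2: "(\<integral>x. exp (\<i> * complex_of_real t * complex_of_real x) * cnj (GG \<alpha>0 \<omega>0 x) \<partial>lborel) = 0" for t
  proof -
    have "(\<integral>x. exp (\<i> * complex_of_real t * complex_of_real x) * cnj (GG \<alpha>0 \<omega>0 x) \<partial>lborel)
        = (\<integral>x. cnj (exp (- \<i> * complex_of_real x * complex_of_real t) * GG \<alpha>0 \<omega>0 x) \<partial>lborel)"
      by (simp add: exp_cnj mult_ac)
    also have "\<dots> = cnj (FF \<alpha>0 \<omega>0 (complex_of_real t))"
      unfolding FF_def by (rule Bochner_Integration.integral_cnj)
    finally show ?thesis using FF0 by simp
  qed
  have int1: "integrable lborel (\<lambda>x. exp (\<i> * complex_of_real t * complex_of_real x) * GG \<alpha>0 \<omega>0 x)" for t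
    using integrable_GG_exp[OF assms(1), of "\<lambda>z. z"] by simp
  have int2: "integrable lborel (\<lambda>x. exp (\<i> * complex_of_real t * complex_of_real x) * cnj (GG \<alpha>0 \<omega>0 x))" for t
  proof -
    have "cnj \<in> borel_measurable borel"
      by (intro borel_measurable_continuous_onI continuous_intros)
    then show ?thesis using integrable_GG_exp[OF assms(1), of cnj] by simp
  qed
  have intG: "integrable lborel (GG \<alpha>0 \<omega>0)"
    using int1[of 0] by simp
  have chRe: "(\<integral>x. iexp (t * x) * complex_of_real (Re (GG \<alpha>0 \<omega>0 x)) \<partial>lborel) = 0" for t
  proof -
    have "(\<integral>x. iexp (t * x) * complex_of_real (Re (GG \<alpha>0 \<omega>0 x)) \<partial>lborel)
       = (\<integral>x. (exp (\<i> * complex_of_real t * complex_of_real x) * GG \<alpha>0 \<omega>0 x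
              + exp (\<i> * complex_of_real t * complex_of_real x) * cnj (GG \<alpha>0 \<omega>0 x)) / 2 \<partial>lborel)"
    proof (rule Bochner_Integration.integral_cong[OF refl])
      fix x
      have "complex_of_real (Re (GG \<alpha>0 \<omega>0 x)) = (GG \<alpha>0 \<omega>0 x + cnj (GG \<alpha>0 \<omega>0 x)) / 2"
        by (simp add: complex_add_cnj)
      note eq = this
      show "iexp (t * x) * complex_of_real (Re (GG \<alpha>0 \<omega>0 x)) = (exp (\<i> * complex_of_real t * complex_of_real x) * GG \<alpha>0 \<omega>0 x
              + exp (\<i> * complex_of_real t * complex_of_real x) * cnj (GG \<alpha>0 \<omega>0 x)) / 2"
        unfolding eq by (simp add: field_simps)
    qed
    also have "\<dots> = 0"
      using I1[of t] I2[of t] int1[of t] int2[of t] by simp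
    finally show ?thesis .
  qed
  have chIm: "(\<integral>x. iexp (t * x) * complex_of_real (Im (GG \<alpha>0 \<omega>0 x)) \<partial>lborel) = 0" for t
  proof -
    have "(\<integral>x. iexp (t * x) * complex_of_real (Im (GG \<alpha>0 \<omega>0 x)) \<partial>lborel)
       = (\<integral>x. (exp (\<i> * complex_of_real t * complex_of_real x) * GG \<alpha>0 \<omega>0 x
              - exp (\<i> * complex_of_real t * complex_of_real x) * cnj (GG \<alpha>0 \<omega>0 x)) / (2 * \<i>) \<partial>lborel)"
    proof (rule Bochner_Integration.integral_cong[OF refl])
      fix x
      have "complex_of_real (Im (GG \<alpha>0 \<omega>0 x)) = (GG \<alpha>0 \<omega>0 x - cnj (GG \<alpha>0 \<omega>0 x)) / (2 * \<i>)"
        by (simp add: complex_diff_cnj field_simps)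
      note eq = this
      show "iexp (t * x) * complex_of_real (Im (GG \<alpha>0 \<omega>0 x)) = (exp (\<i> * complex_of_real t * complex_of_real x) * GG \<alpha>0 \<omega>0 x
              - exp (\<i> * complex_of_real t * complex_of_real x) * cnj (GG \<alpha>0 \<omega>0 x)) / (2 * \<i>)"
        unfolding eq by (simp add: field_simps)
    qed
    also have "\<dots> = 0"
      using I1[of t] I2[of t] int1[of t] int2[of t] by simp
    finally show ?thesis .
  qed
  have "AE x in lborel. Re (GG \<alpha>0 \<omega>0 x) = 0"
    by (rule char_zero_imp_AE_zero[OF _ chRe]) (use intG in simp)
  moreover have "AE x in lborel. Im (GG \<alpha>0 \<omega>0 x) = 0"
    by (rule char_zero_imp_AE_zero[OF _ chIm]) (use intG in simp)
  ultimately have "AE x in lborel. GG \<alpha>0 \<omega>0 x = 0"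
    by eventually_elim (simp add: complex_eq_iff)
  from AE_ex_Ioo[OF this, of 0 1] obtain x where "GG \<alpha>0 \<omega>0 x = 0" by auto
  then show False by (simp add: GG_def)
qed

end
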